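(* Let $p,r$ be positive integers and $s=p+2r$. Let $\Phi^*:V^*_{ps}(\mathbb{R})\to\mathbb{C}^{r\times p}$ be the map $\Phi^*(X)=WZ^{-1}$, where for $X=(X_0;X_1;X_2;X_3)$ (blocks of $p,p,r,r$ rows) $Z=X_0+iX_1$ and $W=X_2+iX_3$. Then the complex valued components of $\Phi^*$ form an orthogonal harmonic family of $\mathbf{GL}_p(\mathbb{R})$-invariant functions on $V^*_{ps}(\mathbb{R})$, equipped with the Euclidean metric.
   Context: $U^*_{ps}(\mathbb{R})=\{X\in\mathbb{R}^{(p+s)\times p}: X^tX \text{ invertible}\}$ and $V^*_{ps}(\mathbb{R})=\{X\in U^*_{ps}(\mathbb{R}): \det Z\neq0\}$. $\mathbf{GL}_p(\mathbb{R})$ acts by right multiplication. The Euclidean metric is $\langle X,Y\rangle=\mathrm{trace}(X^tY)$. For a Riemannian manifold $(M,g)$ and complex functions $\phi,\psi$, $\tau(\phi)$ is the Laplace–Beltrami operator (extended complex-linearly) and $\kappa(\phi,\psi)=g(\mathrm{grad}\,\phi,\mathrm{grad}\,\psi)$ with $g$ extended complex-bilinearly. A set $\Omega$ of complex functions is an orthogonal harmonic family if $\tau(\phi)=0$ and $\kappa(\phi,\psi)=0$ for all $\phi,\psi\in\Omega$. *)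

theory Defs
  imports "HOL-Analysis.Analysis"
begin

definition dir_deriv :: "('a::euclidean_space \<Rightarrow> complex) \<Rightarrow> 'a \<Rightarrow> 'a \<Rightarrow> complex" where
  "dir_deriv f x v = vector_derivative (\<lambda>t::real. f (x + t *\<^sub>R v)) (at 0)"

text \<open>Laplace-Beltrami operator for the Euclidean metric (extended complex-linearly).\<close>
definition tension :: "('a::euclidean_space \<Rightarrow> complex) \<Rightarrow> 'a \<Rightarrow> complex" where
  "tension f x = (\<Sum>b\<in>Basis. dir_deriv (\<lambda>y. dir_deriv f y b) x b)"

text \<open>kappa(f,g) = g(grad f, grad g), Euclidean metric extended complex-bilinearly.\<close>
definition kappa :: "('a::euclidean_space \<Rightarrow> complex) \<Rightarrow> ('a \<Rightarrow> complex) \<Rightarrow> 'a \<Rightarrow> complex" where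
  "kappa f g x = (\<Sum>b\<in>Basis. dir_deriv f x b * dir_deriv g x b)"

definition C2_on :: "'a::euclidean_space set \<Rightarrow> ('a \<Rightarrow> complex) \<Rightarrow> bool" where
  "C2_on U f \<longleftrightarrow> (\<forall>x\<in>U. f differentiable (at x)) \<and>
     (\<forall>b\<in>Basis. \<forall>x\<in>U. (\<lambda>y. dir_deriv f y b) differentiable (at x))"

definition orthogonal_harmonic_family ::
  "'a::euclidean_space set \<Rightarrow> ('a \<Rightarrow> complex) set \<Rightarrow> bool" where
  "orthogonal_harmonic_family U \<Omega> \<longleftrightarrow>
     (\<forall>\<phi>\<in>\<Omega>. \<forall>x\<in>U. tension \<phi> x = 0) \<and>
     (\<forall>\<phi>\<in>\<Omega>. \<forall>\<psi>\<in>\<Omega>. \<forall>x\<in>U. kappa \<phi> \<psi> x = 0)"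

text \<open>Rows of X are indexed by 'p + 'p + 'r + 'r: blocks X0, X1, X2, X3 (s = p + 2r).\<close>
type_synonym ('p, 'r) rowidx = "'p + ('p + ('r + 'r))"

definition U_star :: "(real^'p^('p::finite, 'r::finite) rowidx) set" where
  "U_star = {X. invertible (transpose X ** X)}"

definition Zmat :: "real^'p^('p::finite, 'r::finite) rowidx \<Rightarrow> complex^'p^'p" where
  "Zmat X = (\<chi> j k. complex_of_real (X $ Inl j $ k) + \<i> * complex_of_real (X $ Inr (Inl j) $ k))"

definition Wmat :: "real^'p^('p::finite, 'r::finite) rowidx \<Rightarrow> complex^'p^'r" where
  "Wmat X = (\<chi> a k. complex_of_real (X $ Inr (Inr (Inl a)) $ k)
                    + \<i> * complex_of_real (X $ Inr (Inr (Inr a)) $ k))"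

definition V_star :: "(real^'p^('p::finite, 'r::finite) rowidx) set" where
  "V_star = {X \<in> U_star. det (Zmat X) \<noteq> 0}"

definition Phi_star :: "real^'p^('p::finite, 'r::finite) rowidx \<Rightarrow> complex^'p^'r" where
  "Phi_star X = Wmat X ** matrix_inv (Zmat X)"

end

theory Submission
  imports Defs
begin

type_synonym ('p,'r) cidx = "('p \<times> 'p) + ('r \<times> 'p)"

definition re_row :: "('p::finite,'r::finite) cidx \<Rightarrow> ('p,'r) rowidx" where
  "re_row c = (case c of Inl (j,k) \<Rightarrow> Inl j | Inr (a,k) \<Rightarrow> Inr (Inr (Inl a)))"
definition im_row :: "('p::finite,'r::finite) cidx \<Rightarrow> ('p,'r) rowidx" where
  "im_row c = (case c of Inl (j,k) \<Rightarrow> Inr (Inl j) | Inr (a,k) \<Rightarrow> Inr (Inr (Inr a)))"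
definition col :: "('p::finite,'r::finite) cidx \<Rightarrow> 'p" where
  "col c = (case c of Inl (j,k) \<Rightarrow> k | Inr (a,k) \<Rightarrow> k)"

definition zeta :: "('p::finite,'r::finite) cidx \<Rightarrow> real^'p^('p,'r) rowidx \<Rightarrow> complex" where
  "zeta c v = complex_of_real (v $ re_row c $ col c) + \<i> * complex_of_real (v $ im_row c $ col c)"

lemma Zmat_zeta: "Zmat X $ j $ k = zeta (Inl (j,k)) X"
  by (simp add: Zmat_def zeta_def re_row_def im_row_def col_def)
lemma Wmat_zeta: "Wmat X $ a $ k = zeta (Inr (a,k)) X"
  by (simp add: Wmat_def zeta_def re_row_def im_row_def col_def)

lemma vnth2_deriv: "((\<lambda>x::real^'a^'b. x $ i $ k) has_derivative (\<lambda>v. v $ i $ k)) F"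
proof -
  have "bounded_linear (\<lambda>x::real^'a^'b. x $ i $ k)"
    by (rule bounded_linear_compose[OF bounded_linear_vec_nth[of k] bounded_linear_vec_nth[of i]])
  then show ?thesis by (rule bounded_linear_imp_has_derivative)
qed

lemma zeta_deriv: "(zeta c has_derivative zeta c) (at x)"
  unfolding zeta_def[abs_def]
  by (auto intro!: derivative_eq_intros vnth2_deriv)

lemma zeta_inner: "zeta c v = complex_of_real (v \<bullet> axis (re_row c) (axis (col c) 1))
   + \<i> * complex_of_real (v \<bullet> axis (im_row c) (axis (col c) 1))"
  by (simp add: zeta_def inner_axis cart_eq_inner_axis[symmetric])

lemma re_im_ne: "re_row c \<noteq> im_row d"
  by (auto simp: re_row_def im_row_def split: sum.splits prod.splits)

lemma re_eq: "(re_row c = re_row d \<and> col c = col d) \<longleftrightarrow> c = d"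
  by (auto simp: re_row_def col_def split: sum.splits prod.splits)
lemma im_eq: "(im_row c = im_row d \<and> col c = col d) \<longleftrightarrow> c = d"
  by (auto simp: im_row_def col_def split: sum.splits prod.splits)

lemma sum_basis_of_real:
  fixes u w :: "'a::euclidean_space"
  shows "(\<Sum>b\<in>Basis. complex_of_real (b \<bullet> u) * complex_of_real (b \<bullet> w)) = complex_of_real (u \<bullet> w)"
  by (simp add: euclidean_inner[of u w] inner_commute flip: of_real_mult)

lemma zeta_orth: "(\<Sum>b\<in>Basis. zeta c b * zeta d b) = 0"
proof -
  define ar where "ar c = axis (re_row c) (axis (col c) (1::real))" for c :: "('a,'b) cidx"
  define ai where "ai c = axis (im_row c) (axis (col c) (1::real))" for c :: "('a,'b) cidx"
  have e: "zeta c b * zeta d b =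
     complex_of_real (b \<bullet> ar c) * complex_of_real (b \<bullet> ar d)
   - complex_of_real (b \<bullet> ai c) * complex_of_real (b \<bullet> ai d)
   + \<i> * (complex_of_real (b \<bullet> ar c) * complex_of_real (b \<bullet> ai d)
   + complex_of_real (b \<bullet> ai c) * complex_of_real (b \<bullet> ar d))" for b
    unfolding zeta_inner ar_def ai_def by (simp add: algebra_simps)
  have "(\<Sum>b\<in>Basis. zeta c b * zeta d b) = complex_of_real (ar c \<bullet> ar d) - complex_of_real (ai c \<bullet> ai d)
     + \<i> * (complex_of_real (ar c \<bullet> ai d) + complex_of_real (ai c \<bullet> ar d))"
    unfolding e by (simp add: sum.distrib sum_subtractf sum_distrib_left[symmetric] sum_basis_of_real)
  also have "\<dots> = 0"
    using re_im_ne[of c d] re_im_ne[of d c] re_eq[of c d] im_eq[of c d]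
    by (auto simp: ar_def ai_def inner_axis_axis)
  finally show ?thesis .
qed

definition hol :: "(real^'p^('p::finite,'r::finite) rowidx) set \<Rightarrow> (real^'p^('p,'r) rowidx \<Rightarrow> complex)
    \<Rightarrow> (('p,'r) cidx \<Rightarrow> real^'p^('p,'r) rowidx \<Rightarrow> complex) \<Rightarrow> bool" where
  "hol S f f' \<longleftrightarrow> (\<forall>x\<in>S. (f has_derivative (\<lambda>v. \<Sum>c\<in>UNIV. zeta c v * f' c x)) (at x))"

inductive_set PP :: "(real^'p^('p::finite,'r::finite) rowidx \<Rightarrow> complex) set" where
  const: "(\<lambda>x. k) \<in> PP"
| coord: "zeta c \<in> PP"
| invd: "(\<lambda>x. inverse (det (Zmat x))) \<in> PP"
| add: "f \<in> PP \<Longrightarrow> g \<in> PP \<Longrightarrow> (\<lambda>x. f x + g x) \<in> PP"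
| mul: "f \<in> PP \<Longrightarrow> g \<in> PP \<Longrightarrow> (\<lambda>x. f x * g x) \<in> PP"

definition Good :: "(real^'p^('p::finite,'r::finite) rowidx) set \<Rightarrow> (real^'p^('p,'r) rowidx \<Rightarrow> complex) \<Rightarrow> bool" where
  "Good S f \<longleftrightarrow> (\<exists>f'. hol S f f' \<and> (\<forall>c. f' c \<in> PP))"

lemma good_const: "Good S (\<lambda>x. k)"
  unfolding Good_def hol_def
  by (rule exI[of _ "\<lambda>c x. 0"]) (auto intro: PP.const)

lemma good_coord: "Good S (zeta d)"
  unfolding Good_def hol_def
proof (intro exI[of _ "\<lambda>c x. if c = d then 1 else 0"] conjI ballI allI)
  fix x show "(zeta d has_derivative (\<lambda>v. \<Sum>c\<in>UNIV. zeta c v * (if c = d then 1 else 0))) (at x)"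
    by (simp add: zeta_deriv if_distrib cong: if_cong)
next
  fix c :: "('a,'b) cidx" show "(\<lambda>x::real^'a^('a,'b) rowidx. if c = d then 1 else 0) \<in> PP" by (rule PP.const)
qed

lemma good_add:
  assumes "Good S f" "Good S g" shows "Good S (\<lambda>x. f x + g x)"
proof -
  obtain f' g' where f: "hol S f f'" "\<forall>c. f' c \<in> PP" and g: "hol S g g'" "\<forall>c. g' c \<in> PP"
    using assms unfolding Good_def by blast
  show ?thesis unfolding Good_def
  proof (intro exI[of _ "\<lambda>c x. f' c x + g' c x"] conjI allI)
    show "hol S (\<lambda>x. f x + g x) (\<lambda>c x. f' c x + g' c x)"
      unfolding hol_def
    proof
      fix x assume "x \<in> S"
      with f g have "((\<lambda>x. f x + g x) has_derivative (\<lambda>v. (\<Sum>c\<in>UNIV. zeta c v * f' c x) + (\<Sum>c\<in>UNIV. zeta c v * g' c x))) (at x)"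
        unfolding hol_def by (auto intro!: has_derivative_add)
      then show "((\<lambda>x. f x + g x) has_derivative (\<lambda>v. \<Sum>c\<in>UNIV. zeta c v * (f' c x + g' c x))) (at x)"
        by (simp add: distrib_left sum.distrib)
    qed
    fix c show "(\<lambda>x. f' c x + g' c x) \<in> PP" using f g by (auto intro: PP.add)
  qed
qed

lemma good_mul:
  assumes "Good S f" "Good S g" "f \<in> PP" "g \<in> PP" shows "Good S (\<lambda>x. f x * g x)"
proof -
  obtain f' g' where f: "hol S f f'" "\<forall>c. f' c \<in> PP" and g: "hol S g g'" "\<forall>c. g' c \<in> PP"
    using assms unfolding Good_def by blast
  show ?thesis unfolding Good_def
  proof (intro exI[of _ "\<lambda>c x. f x * g' c x + f' c x * g x"] conjI allI)
    show "hol S (\<lambda>x. f x * g x) (\<lambda>c x. f x * g' c x + f' c x * g x)"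
      unfolding hol_def
    proof
      fix x assume "x \<in> S"
      with f g have "((\<lambda>x. f x * g x) has_derivative (\<lambda>v. f x * (\<Sum>c\<in>UNIV. zeta c v * g' c x) + (\<Sum>c\<in>UNIV. zeta c v * f' c x) * g x)) (at x)"
        unfolding hol_def by (auto intro!: has_derivative_mult)
      then show "((\<lambda>x. f x * g x) has_derivative (\<lambda>v. \<Sum>c\<in>UNIV. zeta c v * (f x * g' c x + f' c x * g x))) (at x)"
        by (simp add: distrib_left sum.distrib sum_distrib_left sum_distrib_right algebra_simps)
    qed
    fix c show "(\<lambda>x. f x * g' c x + f' c x * g x) \<in> PP"
      by (rule PP.add[OF PP.mul[OF assms(3) g(2)[rule_format]] PP.mul[OF f(2)[rule_format] assms(4)]])
  qed
qed

lemma good_sum: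
  assumes "finite A" "\<forall>a\<in>A. Good S (F a) \<and> F a \<in> PP"
  shows "Good S (\<lambda>x. \<Sum>a\<in>A. F a x) \<and> (\<lambda>x. \<Sum>a\<in>A. F a x) \<in> PP"
  using assms
proof (induction A rule: finite_induct)
  case empty then show ?case by (simp add: good_const PP.const)
next
  case (insert a A)
  then show ?case by (simp add: good_add PP.add)
qed

lemma good_prod:
  assumes "finite A" "\<forall>a\<in>A. Good S (F a) \<and> F a \<in> PP"
  shows "Good S (\<lambda>x. \<Prod>a\<in>A. F a x) \<and> (\<lambda>x. \<Prod>a\<in>A. F a x) \<in> PP"
  using assms
proof (induction A rule: finite_induct)
  case empty then show ?case by (simp add: good_const PP.const)
next
  case (insert a A)
  then show ?case by (simp add: good_mul PP.mul)
qed

lemma good_det: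
  assumes "\<And>i j. Good S (E i j) \<and> E i j \<in> PP"
  shows "Good S (\<lambda>x. det (\<chi> i j. E i j x)) \<and> (\<lambda>x. det (\<chi> i j. E i j x)) \<in> PP"
proof -
  have eq: "(\<lambda>x. det (\<chi> i j. E i j x)) = (\<lambda>x. \<Sum>p\<in>{p. p permutes UNIV}. (\<lambda>x. of_int (sign p) * (\<Prod>i\<in>UNIV. E i (p i) x)) x)"
    by (simp add: det_def)
  have "Good S (\<lambda>x. \<Prod>i\<in>UNIV. E i (p i) x) \<and> (\<lambda>x. \<Prod>i\<in>UNIV. E i (p i) x) \<in> PP" for p
    using assms by (intro good_prod) auto
  then have "Good S (\<lambda>x. of_int (sign p) * (\<Prod>i\<in>UNIV. E i (p i) x)) \<and> (\<lambda>x. of_int (sign p) * (\<Prod>i\<in>UNIV. E i (p i) x)) \<in> PP" for p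
    by (auto intro!: good_mul good_const PP.const PP.mul)
  then show ?thesis unfolding eq
    by (intro good_sum) auto
qed

lemma good_detZ: fixes S :: "(real^'p^('p::finite,'r::finite) rowidx) set" shows "Good S (\<lambda>x. det (Zmat x)) \<and> (\<lambda>x. det (Zmat x)) \<in> (PP :: (real^'p^('p::finite,'r::finite) rowidx \<Rightarrow> complex) set)"
proof -
  have eq: "Zmat x = (\<chi> i j. zeta (Inl (i,j)) x)" for x
    by (simp add: vec_eq_iff Zmat_zeta)
  have "Good S (zeta (Inl (i,j))) \<and> zeta (Inl (i,j)) \<in> PP" for i j
    by (simp add: good_coord PP.coord)
  from good_det[of S "\<lambda>i j. zeta (Inl (i,j))", OF this] show ?thesis unfolding eq .
qed

lemma good_invd:
  assumes "\<forall>x\<in>S. det (Zmat x) \<noteq> 0"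
  shows "Good S (\<lambda>x. inverse (det (Zmat x)))"
proof -
  obtain d' where d: "hol S (\<lambda>x. det (Zmat x)) d'" "\<forall>c. d' c \<in> PP"
    using good_detZ unfolding Good_def by blast
  show ?thesis unfolding Good_def
  proof (intro exI[of _ "\<lambda>c x. - 1 * (d' c x * (inverse (det (Zmat x)) * inverse (det (Zmat x))))"] conjI allI)
    show "hol S (\<lambda>x. inverse (det (Zmat x))) (\<lambda>c x. - 1 * (d' c x * (inverse (det (Zmat x)) * inverse (det (Zmat x)))))"
      unfolding hol_def
    proof
      fix x assume x: "x \<in> S"
      have dd: "((\<lambda>x. det (Zmat x)) has_derivative (\<lambda>v. \<Sum>c\<in>UNIV. zeta c v * d' c x)) (at x)"
        using d x unfolding hol_def by blast
      have "((\<lambda>x. inverse (det (Zmat x))) has_derivative (\<lambda>v. - (inverse (det (Zmat x)) * (\<Sum>c\<in>UNIV. zeta c v * d' c x) * inverse (det (Zmat x))))) (at x)"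
        using Deriv.has_derivative_inverse[OF _ dd] assms x by blast
      then show "((\<lambda>x. inverse (det (Zmat x))) has_derivative (\<lambda>v. \<Sum>c\<in>UNIV. zeta c v * (- 1 * (d' c x * (inverse (det (Zmat x)) * inverse (det (Zmat x))))))) (at x)"
        by (simp add: sum_distrib_left sum_distrib_right algebra_simps sum_negf)
    qed
    fix c show "(\<lambda>x. - 1 * (d' c x * (inverse (det (Zmat x)) * inverse (det (Zmat x))))) \<in> PP"
      using PP.mul[OF PP.const[of "- 1"] PP.mul[OF d(2)[rule_format, of c] PP.mul[OF PP.invd PP.invd]]] by simp
  qed
qed

lemma PP_good:
  assumes "f \<in> PP" "\<forall>x\<in>S. det (Zmat x) \<noteq> 0"
  shows "Good S f"
  using assms(1)
  by induction (auto intro: good_const good_coord good_invd[OF assms(2)] good_add good_mul)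

definition Sd :: "(real^'p^('p::finite,'r::finite) rowidx) set" where
  "Sd = {x. det (Zmat x) \<noteq> 0}"

lemma open_Sd: "open (Sd :: (real^'p^('p::finite,'r::finite) rowidx) set)"
proof -
  obtain d' where d: "hol UNIV (\<lambda>x::real^'p^('p,'r) rowidx. det (Zmat x)) d'"
    using good_detZ unfolding Good_def by blast
  have "continuous_on UNIV (\<lambda>x::real^'p^('p,'r) rowidx. det (Zmat x))"
  proof (intro continuous_at_imp_continuous_on ballI)
    fix x :: "real^'p^('p,'r) rowidx"
    have "((\<lambda>x. det (Zmat x)) has_derivative (\<lambda>v. \<Sum>c\<in>UNIV. zeta c v * d' c x)) (at x)"
      using d unfolding hol_def by blast
    then show "isCont (\<lambda>x. det (Zmat x)) x" by (rule has_derivative_continuous)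
  qed
  then show ?thesis unfolding Sd_def
    by (rule open_Collect_neq) (rule continuous_on_const)
qed

lemma matrix_inv_props:
  assumes "invertible A"
  shows "A ** matrix_inv A = mat 1 \<and> matrix_inv A ** A = mat 1"
  using assms unfolding invertible_def matrix_inv_def by (rule someI_ex)

lemma minv_cramer:
  fixes Z :: "complex^'n::finite^'n"
  assumes "det Z \<noteq> 0"
  shows "matrix_inv Z $ j $ k = det (\<chi> i l. if l = j then (if i = k then 1 else 0) else Z $ i $ l) * inverse (det Z)"
proof -
  have inv: "invertible Z" using assms invertible_det_nz by blast
  define M where "M = matrix_inv Z"
  have ZM: "Z ** M = mat 1" using matrix_inv_props[OF inv] M_def by simp
  define v where "v = (\<chi> j. M $ j $ k)"
  have Zv: "(Z *v v) $ i = (if i = k then 1 else 0)" for i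
  proof -
    have "(Z *v v) $ i = (Z ** M) $ i $ k"
      by (simp add: matrix_vector_mult_def matrix_matrix_mult_def v_def)
    then show ?thesis by (simp add: ZM mat_def)
  qed
  have "det (\<chi> i l. if l = j then (Z *v v) $ i else Z $ i $ l) = v $ j * det Z"
    by (rule cramer_lemma)
  then have "det (\<chi> i l. if l = j then (if i = k then 1 else 0) else Z $ i $ l) = v $ j * det Z"
    by (simp only: Zv)
  moreover have "v $ j = M $ j $ k" unfolding v_def by simp
  ultimately have "det (\<chi> i l. if l = j then (if i = k then 1 else 0) else Z $ i $ l) = M $ j $ k * det Z"
    by simp
  then show ?thesis using assms by (simp add: M_def field_simps)
qed

lemma phi_PP:
  "\<exists>\<psi>\<in>PP. \<forall>x\<in>Sd. Phi_star x $ a $ k = \<psi> (x::real^'p^('p::finite,'r::finite) rowidx)"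
proof -
  define E where "E j i l = (\<lambda>x::real^'p^('p,'r) rowidx. if l = j then (if i = k then 1 else 0) else zeta (Inl (i,l)) x)" for j i l
  have gE: "Good Sd (E j i l) \<and> E j i l \<in> PP" for j i l
  proof (cases "l = j")
    case True
    then have "E j i l = (\<lambda>x. if i = k then 1 else 0)" by (simp add: E_def)
    then show ?thesis by (simp add: good_const PP.const)
  next
    case False
    then have "E j i l = zeta (Inl (i,l))" by (simp add: E_def fun_eq_iff)
    then show ?thesis by (simp add: good_coord PP.coord)
  qed
  have dets: "(\<lambda>x. det (\<chi> i l. E j i l x)) \<in> PP" for j
    using good_det[of Sd "E j"] gE by blast
  define F where "F j = (\<lambda>x. zeta (Inr (a,j)) x * ((\<lambda>x. det (\<chi> i l. E j i l x)) x * inverse (det (Zmat x))))" for j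
  have FP: "F j \<in> PP" for j
    unfolding F_def by (rule PP.mul[OF PP.coord PP.mul[OF dets PP.invd]])
  have Sdnz: "\<forall>x\<in>(Sd :: (real^'p^('p,'r) rowidx) set). det (Zmat x) \<noteq> 0" by (simp add: Sd_def)
  have "\<forall>j\<in>UNIV. Good Sd (F j) \<and> F j \<in> PP" using FP PP_good[OF _ Sdnz] by blast
  from good_sum[OF _ this] have "(\<lambda>x. \<Sum>j\<in>UNIV. F j x) \<in> PP" by simp
  moreover have "\<forall>x\<in>Sd. Phi_star x $ a $ k = (\<Sum>j\<in>UNIV. F j x)"
  proof
    fix x :: "real^'p^('p,'r) rowidx" assume x: "x \<in> Sd"
    have "(\<chi> i l. E j i l x) = (\<chi> i l. if l = j then (if i = k then 1 else 0) else Zmat x $ i $ l)" for j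
      by (simp add: E_def vec_eq_iff Zmat_zeta)
    then show "Phi_star x $ a $ k = (\<Sum>j\<in>UNIV. F j x)"
      using x by (simp add: Phi_star_def matrix_matrix_mult_def F_def Wmat_zeta minv_cramer Sd_def)
  qed
  ultimately show ?thesis by (intro bexI[where x="\<lambda>x. \<Sum>j\<in>UNIV. F j x"]) auto
qed

lemma dir_deriv_eq:
  assumes "(f has_derivative D) (at x)"
  shows "dir_deriv f x v = D v"
proof -
  have g: "((\<lambda>t::real. x + t *\<^sub>R v) has_derivative (\<lambda>t. t *\<^sub>R v)) (at 0)"
    by (auto intro!: derivative_eq_intros)
  have f0: "(f has_derivative D) (at (x + 0 *\<^sub>R v))" using assms by simp
  have "((\<lambda>t. f (x + t *\<^sub>R v)) has_derivative (\<lambda>t. D (t *\<^sub>R v))) (at 0)"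
    by (rule has_derivative_compose[OF g f0])
  moreover have "linear D" using assms has_derivative_linear by blast
  ultimately have "((\<lambda>t. f (x + t *\<^sub>R v)) has_derivative (\<lambda>t. t *\<^sub>R D v)) (at 0)"
    by (simp add: linear_cmul)
  then have "((\<lambda>t. f (x + t *\<^sub>R v)) has_vector_derivative D v) (at 0)"
    by (simp add: has_vector_derivative_def)
  then show ?thesis unfolding dir_deriv_def by (rule vector_derivative_at)
qed

lemma nice:
  fixes \<phi> :: "real^'p^('p::finite,'r::finite) rowidx \<Rightarrow> complex"
  assumes "\<psi> \<in> PP" "\<forall>x\<in>Sd. \<phi> x = \<psi> x"
  obtains f' f'' where
    "\<forall>x\<in>Sd. (\<phi> has_derivative (\<lambda>v. \<Sum>c\<in>UNIV. zeta c v * f' c x)) (at x)"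
    "\<forall>b. \<forall>x\<in>Sd. ((\<lambda>y. dir_deriv \<phi> y b) has_derivative
        (\<lambda>v. \<Sum>c\<in>UNIV. zeta c b * (\<Sum>d\<in>UNIV. zeta d v * f'' c d x))) (at x)"
proof -
  have Sdnz: "\<forall>x\<in>(Sd :: (real^'p^('p,'r) rowidx) set). det (Zmat x) \<noteq> 0" by (simp add: Sd_def)
  obtain f' where f': "hol Sd \<psi> f'" "\<forall>c. f' c \<in> PP"
    using PP_good[OF assms(1) Sdnz] unfolding Good_def by blast
  have "\<forall>c. \<exists>g. hol Sd (f' c) g"
    using PP_good[OF _ Sdnz] f'(2) unfolding Good_def by blast
  then obtain f'' where f'': "\<And>c. hol Sd (f' c) (f'' c)" by metis
  have D1: "(\<phi> has_derivative (\<lambda>v. \<Sum>c\<in>UNIV. zeta c v * f' c x)) (at x)" if x: "x \<in> Sd" for x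
  proof (rule has_derivative_transform_within_open[OF _ open_Sd x])
    show "(\<psi> has_derivative (\<lambda>v. \<Sum>c\<in>UNIV. zeta c v * f' c x)) (at x)"
      using f'(1) x unfolding hol_def by blast
    show "\<And>y. y \<in> Sd \<Longrightarrow> \<psi> y = \<phi> y" using assms(2) by simp
  qed
  have D2: "((\<lambda>y. dir_deriv \<phi> y b) has_derivative
        (\<lambda>v. \<Sum>c\<in>UNIV. zeta c b * (\<Sum>d\<in>UNIV. zeta d v * f'' c d x))) (at x)" if x: "x \<in> Sd" for x b
  proof (rule has_derivative_transform_within_open[OF _ open_Sd x])
    have "\<And>c. (f' c has_derivative (\<lambda>v. \<Sum>d\<in>UNIV. zeta d v * f'' c d x)) (at x)"
      using f'' x unfolding hol_def by blast
    then show "((\<lambda>y. \<Sum>c\<in>UNIV. zeta c b * f' c y) has_derivative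
        (\<lambda>v. \<Sum>c\<in>UNIV. zeta c b * (\<Sum>d\<in>UNIV. zeta d v * f'' c d x))) (at x)"
      by (auto intro!: has_derivative_sum has_derivative_mult_right)
    fix y :: "real^'p^('p,'r) rowidx" assume y: "y \<in> Sd"
    show "(\<Sum>c\<in>UNIV. zeta c b * f' c y) = dir_deriv \<phi> y b"
      using dir_deriv_eq[OF D1[OF y]] by simp
  qed
  show ?thesis using D1 D2 by (intro that[of f' f'']) blast+
qed

lemma swap3:
  fixes F :: "('p::finite,'r::finite) cidx \<Rightarrow> ('p,'r) cidx \<Rightarrow> complex"
  shows "(\<Sum>b\<in>(Basis::(real^'p^('p,'r) rowidx) set). (\<Sum>c\<in>UNIV. zeta c b * (\<Sum>d\<in>UNIV. zeta d b * F c d))) = 0"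
proof -
  have "(\<Sum>b\<in>(Basis::(real^'p^('p,'r) rowidx) set). (\<Sum>c\<in>UNIV. zeta c b * (\<Sum>d\<in>UNIV. zeta d b * F c d)))
     = (\<Sum>b\<in>(Basis::(real^'p^('p,'r) rowidx) set). \<Sum>c\<in>UNIV. \<Sum>d\<in>UNIV. F c d * (zeta c b * zeta d b))"
    by (simp add: sum_distrib_left algebra_simps)
  also have "\<dots> = (\<Sum>c\<in>UNIV. \<Sum>d\<in>UNIV. \<Sum>b\<in>(Basis::(real^'p^('p,'r) rowidx) set). F c d * (zeta c b * zeta d b))"
    by (subst sum.swap) (simp add: sum.swap[of _ Basis])
  also have "\<dots> = 0"
    by (simp add: sum_distrib_left[symmetric] zeta_orth)
  finally show ?thesis .
qed

lemma swap3k: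
  fixes F G :: "('p::finite,'r::finite) cidx \<Rightarrow> complex"
  shows "(\<Sum>b\<in>(Basis::(real^'p^('p,'r) rowidx) set). (\<Sum>c\<in>UNIV. zeta c b * F c) * (\<Sum>d\<in>UNIV. zeta d b * G d)) = 0"
proof -
  have "(\<Sum>b\<in>(Basis::(real^'p^('p,'r) rowidx) set). (\<Sum>c\<in>UNIV. zeta c b * F c) * (\<Sum>d\<in>UNIV. zeta d b * G d))
     = (\<Sum>b\<in>(Basis::(real^'p^('p,'r) rowidx) set). (\<Sum>c\<in>UNIV. zeta c b * (\<Sum>d\<in>UNIV. zeta d b * (F c * G d))))"
    unfolding sum_product by (intro sum.cong refl) (simp add: sum_distrib_left mult_ac)
  also have "\<dots> = 0" by (rule swap3)
  finally show ?thesis .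
qed


lemma Zmat_mult: "Zmat (X ** A) = Zmat X ** (\<chi> i j. complex_of_real (A $ i $ j))"
  by (simp add: vec_eq_iff Zmat_def matrix_matrix_mult_def of_real_sum sum.distrib sum_distrib_left algebra_simps)

lemma Wmat_mult: "Wmat (X ** A) = Wmat X ** (\<chi> i j. complex_of_real (A $ i $ j))"
  by (simp add: vec_eq_iff Wmat_def matrix_matrix_mult_def of_real_sum sum.distrib sum_distrib_left algebra_simps)

lemma det_ofreal: "det (\<chi> i j. complex_of_real (A $ i $ j)) = complex_of_real (det A)"
  by (simp add: det_def of_real_sum of_real_mult of_real_prod)

lemma invariance:
  fixes A :: "real^'p^'p" and X :: "real^'p^('p::finite,'r::finite) rowidx"
  assumes A: "invertible A" and X: "X \<in> V_star"
  shows "X ** A \<in> V_star \<and> Phi_star (X ** A) = Phi_star X"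
proof -
  define Ac where "Ac = (\<chi> i j. complex_of_real (A $ i $ j))"
  have dA: "det A \<noteq> 0" using A invertible_det_nz by blast
  have dZ: "det (Zmat X) \<noteq> 0" and U: "invertible (transpose X ** X)"
    using X by (auto simp: V_star_def U_star_def)
  have "transpose (X ** A) ** (X ** A) = transpose A ** (transpose X ** X) ** A"
    by (simp add: matrix_transpose_mul matrix_mul_assoc)
  then have U2: "invertible (transpose (X ** A) ** (X ** A))"
    using U A by (simp add: invertible_mult transpose_invertible)
  have dZA: "det (Zmat (X ** A)) \<noteq> 0"
    using dZ dA by (simp add: Zmat_mult det_mul det_ofreal)
  have inv1: "invertible (Zmat X)" using dZ invertible_det_nz by blast
  have inv2: "invertible (Zmat X ** Ac)" using dZA invertible_det_nz Zmat_mult Ac_def by metis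
  define M where "M = matrix_inv (Zmat X)"
  define N where "N = matrix_inv (Zmat X ** Ac)"
  have MZ: "M ** Zmat X = mat 1" using matrix_inv_props[OF inv1] M_def by simp
  have ZN: "Zmat X ** Ac ** N = mat 1" using matrix_inv_props[OF inv2] N_def by simp
  have "Ac ** N = M ** (Zmat X ** Ac ** N)"
    by (simp add: matrix_mul_assoc MZ)
  also have "\<dots> = M" by (simp add: ZN)
  finally have AN: "Ac ** N = M" .
  have "Phi_star (X ** A) = Wmat X ** Ac ** N"
    by (simp add: Phi_star_def Wmat_mult Zmat_mult Ac_def N_def)
  also have "\<dots> = Phi_star X"
    by (simp add: Phi_star_def M_def[symmetric] AN flip: matrix_mul_assoc)
  finally show ?thesis using U2 dZA by (simp add: V_star_def U_star_def)
qed

theorem proposition9p2: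
  defines "\<Omega> \<equiv> {(\<lambda>X::real^'p^('p::finite, 'r::finite) rowidx. Phi_star X $ a $ k) | a k. True}"
  shows "orthogonal_harmonic_family (V_star :: (real^'p^('p, 'r) rowidx) set) \<Omega>
       \<and> (\<forall>\<phi>\<in>\<Omega>. C2_on V_star \<phi>)
       \<and> (\<forall>A::real^'p^'p. invertible A \<longrightarrow>
            (\<forall>X\<in>V_star. X ** A \<in> V_star \<and> (\<forall>\<phi>\<in>\<Omega>. \<phi> (X ** A) = \<phi> X)))"
proof -
  have fam: "\<exists>\<psi>\<in>PP. \<forall>x\<in>Sd. \<phi> x = \<psi> x" if "\<phi> \<in> \<Omega>" for \<phi>
    using that phi_PP unfolding \<Omega>_def by blast
  have VS: "x \<in> Sd" if "x \<in> V_star" for x :: "real^'p^('p, 'r) rowidx"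
    using that by (simp add: V_star_def Sd_def)
  have T: "tension \<phi> x = 0" if h: "\<phi> \<in> \<Omega>" "x \<in> V_star" for \<phi> x
  proof -
    obtain \<psi> where "\<psi> \<in> PP" "\<forall>x\<in>Sd. \<phi> x = \<psi> x" using fam h(1) by blast
    then obtain f' f'' where D1: "\<forall>x\<in>Sd. (\<phi> has_derivative (\<lambda>v. \<Sum>c\<in>UNIV. zeta c v * f' c x)) (at x)"
      and D2: "\<forall>b. \<forall>x\<in>Sd. ((\<lambda>y. dir_deriv \<phi> y b) has_derivative
        (\<lambda>v. \<Sum>c\<in>UNIV. zeta c b * (\<Sum>d\<in>UNIV. zeta d v * f'' c d x))) (at x)"
      by (rule nice)
    have "tension \<phi> x = (\<Sum>b\<in>Basis. \<Sum>c\<in>UNIV. zeta c b * (\<Sum>d\<in>UNIV. zeta d b * f'' c d x))"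
      unfolding tension_def using D2 VS[OF h(2)] by (intro sum.cong refl dir_deriv_eq) blast
    also have "\<dots> = 0" by (rule swap3)
    finally show ?thesis .
  qed
  have K: "kappa \<phi> \<psi> x = 0" if h: "\<phi> \<in> \<Omega>" "\<psi> \<in> \<Omega>" "x \<in> V_star" for \<phi> \<psi> x
  proof -
    obtain \<psi>1 where "\<psi>1 \<in> PP" "\<forall>x\<in>Sd. \<phi> x = \<psi>1 x" using fam h(1) by blast
    then obtain f' f'' where D1: "\<forall>x\<in>Sd. (\<phi> has_derivative (\<lambda>v. \<Sum>c\<in>UNIV. zeta c v * f' c x)) (at x)"
      by (rule nice)
    obtain \<psi>2 where "\<psi>2 \<in> PP" "\<forall>x\<in>Sd. \<psi> x = \<psi>2 x" using fam h(2) by blast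
    then obtain g' g'' where E1: "\<forall>x\<in>Sd. (\<psi> has_derivative (\<lambda>v. \<Sum>c\<in>UNIV. zeta c v * g' c x)) (at x)"
      by (rule nice)
    have "kappa \<phi> \<psi> x = (\<Sum>b\<in>Basis. (\<Sum>c\<in>UNIV. zeta c b * f' c x) * (\<Sum>d\<in>UNIV. zeta d b * g' d x))"
    proof -
      have xS: "x \<in> Sd" using VS[OF h(3)] .
      have e1: "dir_deriv \<phi> x b = (\<Sum>c\<in>UNIV. zeta c b * f' c x)" for b
        using dir_deriv_eq[OF D1[rule_format, OF xS]] .
      have e2: "dir_deriv \<psi> x b = (\<Sum>c\<in>UNIV. zeta c b * g' c x)" for b
        using dir_deriv_eq[OF E1[rule_format, OF xS]] .
      show ?thesis unfolding kappa_def e1 e2 ..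
    qed
    also have "\<dots> = 0" by (rule swap3k)
    finally show ?thesis .
  qed
  have C: "C2_on V_star \<phi>" if h: "\<phi> \<in> \<Omega>" for \<phi>
  proof -
    obtain \<psi> where "\<psi> \<in> PP" "\<forall>x\<in>Sd. \<phi> x = \<psi> x" using fam h(1) by blast
    then obtain f' f'' where D1: "\<forall>x\<in>Sd. (\<phi> has_derivative (\<lambda>v. \<Sum>c\<in>UNIV. zeta c v * f' c x)) (at x)"
      and D2: "\<forall>b. \<forall>x\<in>Sd. ((\<lambda>y. dir_deriv \<phi> y b) has_derivative
        (\<lambda>v. \<Sum>c\<in>UNIV. zeta c b * (\<Sum>d\<in>UNIV. zeta d v * f'' c d x))) (at x)"
      by (rule nice)
    show ?thesis unfolding C2_on_def differentiable_def
      using D1 D2 VS by blast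
  qed
  have I: "\<forall>A::real^'p^'p. invertible A \<longrightarrow>
            (\<forall>X\<in>V_star. X ** A \<in> V_star \<and> (\<forall>\<phi>\<in>\<Omega>. \<phi> (X ** A) = \<phi> X))"
  proof (intro allI impI ballI conjI)
    fix A :: "real^'p^'p" and X :: "real^'p^('p, 'r) rowidx"
    assume A: "invertible A" and X: "X \<in> V_star"
    note inv = invariance[OF A X]
    show "X ** A \<in> V_star" using inv by blast
    fix \<phi> assume "\<phi> \<in> \<Omega>"
    then obtain a k where "\<phi> = (\<lambda>X. Phi_star X $ a $ k)" unfolding \<Omega>_def by blast
    then show "\<phi> (X ** A) = \<phi> X" using inv by simp
  qed
  show ?thesis
    unfolding orthogonal_harmonic_family_def
    using T K C I by blast
qed

end
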